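(* Let $A$, $B$ be lattices, where $A$ is generated by a set of join prime elements and satisfies Whitman's condition (W). Let $g\colon A\to D$ and $h\colon B\to D$ be epimorphisms onto a lattice $D$. If the fiber product $\{(a,b)\in A\times B: g(a)=h(b)\}$ is a finitely generated sublattice of $A\times B$, then $h$ is lower bounded.
   Context: Whitman's condition (W): for all finite $S,T$, if $\bigwedge S\le\bigvee T$ then some $s\in S$ has $s\le\bigvee T$ or some $t\in T$ has $\bigwedge S\le t$. An element $p$ is join prime if $p\le x\vee y$ implies $p\le x$ or $p\le y$. A lattice homomorphism $h\colon B\to D$ is lower bounded if for every $d\in D$ the set $\{x\in B: h(x)\ge d\}$ is empty or has a least element. *)

theory Defs
  imports Main "HOL-Library.Product_Order"
begin

inductive_set lat_gen :: "'a::lattice set \<Rightarrow> 'a set" for X :: "'a set" where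
  base: "x \<in> X \<Longrightarrow> x \<in> lat_gen X"
| join: "x \<in> lat_gen X \<Longrightarrow> y \<in> lat_gen X \<Longrightarrow> sup x y \<in> lat_gen X"
| meet: "x \<in> lat_gen X \<Longrightarrow> y \<in> lat_gen X \<Longrightarrow> inf x y \<in> lat_gen X"

definition join_prime :: "'a::lattice \<Rightarrow> bool" where
  "join_prime p \<longleftrightarrow> (\<forall>x y. p \<le> sup x y \<longrightarrow> p \<le> x \<or> p \<le> y)"

definition whitman :: "'a::lattice itself \<Rightarrow> bool" where
  "whitman _ \<longleftrightarrow> (\<forall>S T :: 'a set. finite S \<and> S \<noteq> {} \<and> finite T \<and> T \<noteq> {} \<and>
      Inf_fin S \<le> Sup_fin T \<longrightarrow> (\<exists>s\<in>S. s \<le> Sup_fin T) \<or> (\<exists>t\<in>T. Inf_fin S \<le> t))"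

definition lattice_hom :: "('a::lattice \<Rightarrow> 'b::lattice) \<Rightarrow> bool" where
  "lattice_hom f \<longleftrightarrow> (\<forall>x y. f (sup x y) = sup (f x) (f y) \<and> f (inf x y) = inf (f x) (f y))"

definition lower_bounded :: "('a::lattice \<Rightarrow> 'b::lattice) \<Rightarrow> bool" where
  "lower_bounded h \<longleftrightarrow> (\<forall>d. {x. d \<le> h x} = {} \<or> (\<exists>m. m \<in> {x. d \<le> h x} \<and> (\<forall>x\<in>{x. d \<le> h x}. m \<le> x)))"

definition fiber_product :: "('a \<Rightarrow> 'd) \<Rightarrow> ('b \<Rightarrow> 'd) \<Rightarrow> ('a \<times> 'b) set" where
  "fiber_product g h = {(a, b). g a = h b}"

end

theory Submission
  imports Defs
begin

lemma hom_mono: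
  assumes "lattice_hom f" "x \<le> y" shows "f x \<le> f y"
proof -
  have "f y = sup (f x) (f y)" using assms unfolding lattice_hom_def
    by (metis sup_absorb2)
  thus ?thesis by (metis sup.cobounded1)
qed

lemma hom_Inf_fin:
  assumes h: "lattice_hom h" and "finite S" "S \<noteq> {}" "\<forall>v\<in>S. c \<le> h v"
  shows "c \<le> h (Inf_fin S)"
  using assms(2,3,4)
proof (induction S rule: finite_ne_induct)
  case (singleton x) then show ?case by simp
next
  case (insert x F)
  then show ?case using h unfolding lattice_hom_def by simp
qed

theorem mainTheorem13:
  fixes g :: "'a::lattice \<Rightarrow> 'd::lattice" and h :: "'b::lattice \<Rightarrow> 'd"
  assumes genA: "\<exists>P. (\<forall>p\<in>P. join_prime p) \<and> lat_gen P = (UNIV :: 'a set)"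
    and W: "whitman TYPE('a)"
    and g_hom: "lattice_hom g" and g_surj: "surj g"
    and h_hom: "lattice_hom h" and h_surj: "surj h"
    and fg: "\<exists>G. finite G \<and> lat_gen G = fiber_product g h"
  shows "lower_bounded h"
proof -
  obtain P where P: "\<forall>p\<in>P. join_prime p" "lat_gen P = (UNIV :: 'a set)" using genA by blast
  obtain G where G: "finite G" "lat_gen G = fiber_product g h" using fg by blast
  have GL: "g (fst z) = h (snd z)" if "z \<in> G" for z
  proof -
    have "z \<in> lat_gen G" using that by (rule lat_gen.base)
    hence "z \<in> fiber_product g h" using G(2) by simp
    thus ?thesis by (simp add: fiber_product_def case_prod_beta)
  qed
  have finS: "finite {snd z |z. z \<in> G \<and> a \<le> fst z}" for a :: 'a
  proof -
    have "{snd z |z. z \<in> G \<and> a \<le> fst z} \<subseteq> snd ` G" by blast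
    thus ?thesis using G(1) finite_subset by blast
  qed
  have gS: "\<forall>v\<in>{snd z |z. z \<in> G \<and> a \<le> fst z}. g a \<le> h v" for a
    using GL hom_mono[OF g_hom] by fastforce
  have Q: "\<exists>\<beta>. g a \<le> h \<beta> \<and> (\<forall>z\<in>lat_gen G. a \<le> fst z \<longrightarrow> \<beta> \<le> snd z)"
    if "a \<in> lat_gen P" for a
    using that
  proof (induction a rule: lat_gen.induct)
    case (base a)
    obtain b where b: "h b = g a" using h_surj by (metis surjD)
    define S where "S = insert b {snd z |z. z \<in> G \<and> a \<le> fst z}"
    have fS: "finite S" "S \<noteq> {}" using finS[of a] by (auto simp: S_def)
    have jp: "join_prime a" using P(1) base by blast
    have "g a \<le> h (Inf_fin S)"
      by (rule hom_Inf_fin[OF h_hom fS]) (use gS[of a] b in \<open>auto simp: S_def\<close>)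
    moreover have "a \<le> fst z \<longrightarrow> Inf_fin S \<le> snd z" if "z \<in> lat_gen G" for z
      using that
    proof (induction z rule: lat_gen.induct)
      case (base x)
      show ?case
      proof
        assume "a \<le> fst x"
        hence "snd x \<in> S" unfolding S_def using base by blast
        thus "Inf_fin S \<le> snd x" using fS by (intro Inf_fin.coboundedI)
      qed
    next
      case (join x y)
      show ?case
      proof
        assume "a \<le> fst (sup x y)"
        hence "a \<le> fst x \<or> a \<le> fst y" using jp unfolding join_prime_def by simp
        thus "Inf_fin S \<le> snd (sup x y)" using join.IH by (auto intro: le_supI1 le_supI2)
      qed
    next
      case (meet x y) then show ?case by auto
    qed
    ultimately show ?case by blast
  next
    case (join a1 a2)
    obtain b1 where b1: "g a1 \<le> h b1" "\<forall>z\<in>lat_gen G. a1 \<le> fst z \<longrightarrow> b1 \<le> snd z"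
      using join.IH(1) by blast
    obtain b2 where b2: "g a2 \<le> h b2" "\<forall>z\<in>lat_gen G. a2 \<le> fst z \<longrightarrow> b2 \<le> snd z"
      using join.IH(2) by blast
    have "g (sup a1 a2) \<le> h (sup b1 b2)" using g_hom h_hom b1(1) b2(1)
      unfolding lattice_hom_def by (simp add: le_supI1 le_supI2)
    moreover have "\<forall>z\<in>lat_gen G. sup a1 a2 \<le> fst z \<longrightarrow> sup b1 b2 \<le> snd z"
      using b1(2) b2(2) by simp
    ultimately show ?case by blast
  next
    case (meet a1 a2)
    obtain b1 where b1: "g a1 \<le> h b1" "\<forall>z\<in>lat_gen G. a1 \<le> fst z \<longrightarrow> b1 \<le> snd z"
      using meet.IH(1) by blast
    obtain b2 where b2: "g a2 \<le> h b2" "\<forall>z\<in>lat_gen G. a2 \<le> fst z \<longrightarrow> b2 \<le> snd z"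
      using meet.IH(2) by blast
    define a where "a = inf a1 a2"
    define S where "S = insert b1 (insert b2 {snd z |z. z \<in> G \<and> a \<le> fst z})"
    have fS: "finite S" "S \<noteq> {}" using finS[of a] by (auto simp: S_def)
    have ga1: "g a \<le> g a1" "g a \<le> g a2" using hom_mono[OF g_hom] by (auto simp: a_def)
    have "g a \<le> h (Inf_fin S)"
      by (rule hom_Inf_fin[OF h_hom fS]) (use gS[of a] b1 b2 ga1 in \<open>auto simp: S_def intro: order_trans\<close>)
    moreover have "a \<le> fst z \<longrightarrow> Inf_fin S \<le> snd z" if "z \<in> lat_gen G" for z
      using that
    proof (induction z rule: lat_gen.induct)
      case (base x)
      show ?case
      proof
        assume "a \<le> fst x"
        hence "snd x \<in> S" unfolding S_def using base by blast
        thus "Inf_fin S \<le> snd x" using fS by (intro Inf_fin.coboundedI)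
      qed
    next
      case (join x y)
      show ?case
      proof
        assume le: "a \<le> fst (sup x y)"
        have "b1 \<in> S" "b2 \<in> S" unfolding S_def by blast+
        hence Sb1: "Inf_fin S \<le> b1" "Inf_fin S \<le> b2" using fS by (auto intro!: Inf_fin.coboundedI)
        have "Inf_fin {a1, a2} \<le> Sup_fin {fst x, fst y}" using le by (simp add: a_def)
        hence "(\<exists>s\<in>{a1,a2}. s \<le> Sup_fin {fst x, fst y}) \<or> (\<exists>t\<in>{fst x, fst y}. Inf_fin {a1,a2} \<le> t)"
          using W[unfolded whitman_def, rule_format, of "{a1,a2}" "{fst x, fst y}"] by simp
        hence "a1 \<le> sup (fst x) (fst y) \<or> a2 \<le> sup (fst x) (fst y) \<or> inf a1 a2 \<le> fst x \<or> inf a1 a2 \<le> fst y"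
          by simp
        hence "a1 \<le> fst (sup x y) \<or> a2 \<le> fst (sup x y) \<or> a \<le> fst x \<or> a \<le> fst y"
          unfolding a_def by simp
        moreover have "sup x y \<in> lat_gen G" using join.hyps by (rule lat_gen.join)
        ultimately show "Inf_fin S \<le> snd (sup x y)"
        proof (elim disjE conjE)
          assume "a1 \<le> fst (sup x y)" "sup x y \<in> lat_gen G"
          hence "b1 \<le> snd (sup x y)" using b1(2) by blast
          thus ?thesis using Sb1(1) by (metis order_trans)
        next
          assume "a2 \<le> fst (sup x y)" "sup x y \<in> lat_gen G"
          hence "b2 \<le> snd (sup x y)" using b2(2) by blast
          thus ?thesis using Sb1(2) by (metis order_trans)
        next
          assume "a \<le> fst x"
          hence "Inf_fin S \<le> snd x" using join.IH(1) by blast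
          thus ?thesis by (simp add: le_supI1)
        next
          assume "a \<le> fst y"
          hence "Inf_fin S \<le> snd y" using join.IH(2) by blast
          thus ?thesis by (simp add: le_supI2)
        qed
      qed
    next
      case (meet x y) then show ?case by auto
    qed
    ultimately show ?case unfolding a_def by blast
  qed
  show ?thesis unfolding lower_bounded_def
  proof (intro allI disjI2)
    fix d
    obtain a where a: "g a = d" using g_surj by (metis surjD)
    obtain \<beta> where \<beta>: "g a \<le> h \<beta>" "\<forall>z\<in>lat_gen G. a \<le> fst z \<longrightarrow> \<beta> \<le> snd z"
      using Q[of a] P(2) by blast
    have "\<forall>x\<in>{x. d \<le> h x}. \<beta> \<le> x"
    proof
      fix x assume "x \<in> {x. d \<le> h x}"
      hence dx: "g a \<le> h x" using a by simp
      obtain x' where x': "g x' = h x" using g_surj by (metis surjD)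
      have "g (sup x' a) = h x" using g_hom x' dx unfolding lattice_hom_def
        by (simp add: sup_absorb1)
      hence "(sup x' a, x) \<in> lat_gen G" using G(2) by (simp add: fiber_product_def)
      thus "\<beta> \<le> x" using \<beta>(2) by force
    qed
    thus "\<exists>m. m \<in> {x. d \<le> h x} \<and> (\<forall>x\<in>{x. d \<le> h x}. m \<le> x)" using \<beta>(1) a by blast
  qed
qed

end
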